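(* Let $\mathcal D=V(\mathcal I)$ where $\mathcal I$ is a finite tuple-independent probabilistic database and $V$ is a monotone view. Then $\mathcal D\in\mathsf{sjfCQ}(\mathsf{TI}_{\mathsf{fin}})$.
   Context: Fix a countably infinite universe $U$. A database schema is a finite nonempty set of relation symbols with arities; facts are $R(u_1,\dots,u_{\mathrm{ar}(R)})$ with $u_i\in U$; an instance is a finite set of facts; $\mathrm{adom}(D)$ is the set of elements of $U$ occurring in $D$. A probabilistic database (PDB) is a discrete probability space $(\mathbb D,P)$ with $\mathbb D$ a nonempty countable set of instances; it is finite if $\mathbb D$ is finite. A PDB $\mathcal I$ is tuple-independent if for all pairwise distinct facts $f_1,\dots,f_k$, $\Pr(f_1\in I,\dots,f_k\in I)=\prod_i\Pr(f_i\in I)$; $\mathsf{TI}_{\mathsf{fin}}$ is the class of finite tuple-independent PDBs. A view is a function from instances of an input schema to instances of an output schema; it is monotone if $D\subseteq D'$ implies $V(D)\subseteq V(D')$. The image of a PDB $(\mathbb D,P)$ under $V$ is the PDB on $V(\mathbb D)$ with $P'(\{D'\})=P(\{D:V(D)=D'\})$. A self-join free conjunctive query is a first-order formula built from relational atoms $R(\bar u)$ ($\bar u$ variables or constants) and equality atoms using only $\exists$ and $\wedge$, in which each relation symbol occurs at most once; it is evaluated under active domain semantics. An sjfCQ-view consists of one such formula $\Phi_R(x_1,\dots,x_{\mathrm{ar}(R)})$ per output relation $R$, mapping $D$ to the instance of all $R(\bar a)$ with $\bar a$ over $\mathrm{adom}(D)\cup\mathrm{adom}(\Phi_R)$ and $D\models\Phi_R[\bar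 a]$. $\mathsf{sjfCQ}(\mathsf{TI}_{\mathsf{fin}})$ is the class of images of finite TI-PDBs under sjfCQ-views. *)

theory Defs
  imports "HOL-Analysis.Infinite_Sum"
begin

text \<open>A relation symbol is a pair (name, arity); its arity is the second component.\<close>
type_synonym rsym = "nat \<times> nat"

definition ar :: "rsym \<Rightarrow> nat" where "ar R = snd R"

type_synonym 'u fact = "rsym \<times> 'u list"
type_synonym 'u inst = "'u fact set"

definition is_schema :: "rsym set \<Rightarrow> bool" where
  "is_schema S \<longleftrightarrow> finite S \<and> S \<noteq> {}"

definition is_fact :: "rsym set \<Rightarrow> 'u fact \<Rightarrow> bool" where
  "is_fact S f \<longleftrightarrow> fst f \<in> S \<and> length (snd f) = ar (fst f)"

definition is_instance :: "rsym set \<Rightarrow> 'u inst \<Rightarrow> bool" where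
  "is_instance S D \<longleftrightarrow> finite D \<and> (\<forall>f\<in>D. is_fact S f)"

definition adom :: "'u inst \<Rightarrow> 'u set" where
  "adom D = (\<Union>f\<in>D. set (snd f))"

text \<open>A PDB is a pair (sample space, probability mass function); the mass function is
  normalised to be 0 outside the sample space.\<close>
type_synonym 'u pdb = "'u inst set \<times> ('u inst \<Rightarrow> real)"

definition is_pdb :: "rsym set \<Rightarrow> 'u pdb \<Rightarrow> bool" where
  "is_pdb S I \<longleftrightarrow>
     fst I \<noteq> {} \<and> countable (fst I) \<and> (\<forall>D\<in>fst I. is_instance S D) \<and>
     (\<forall>D. snd I D \<ge> 0) \<and> (\<forall>D. D \<notin> fst I \<longrightarrow> snd I D = 0) \<and>
     (snd I has_sum 1) (fst I)"

definition finite_pdb :: "'u pdb \<Rightarrow> bool" where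
  "finite_pdb I \<longleftrightarrow> finite (fst I)"

definition Pr :: "'u pdb \<Rightarrow> ('u inst \<Rightarrow> bool) \<Rightarrow> real" where
  "Pr I E = infsum (snd I) {D \<in> fst I. E D}"

text \<open>Tuple independence: for all pairwise distinct facts f_1..f_k (i.e. every finite set F of
  facts), Pr(all f_i in I) = product of Pr(f_i in I).\<close>
definition tuple_independent :: "'u pdb \<Rightarrow> bool" where
  "tuple_independent I \<longleftrightarrow>
     (\<forall>F::'u fact set. finite F \<longrightarrow>
        Pr I (\<lambda>D. F \<subseteq> D) = (\<Prod>f\<in>F. Pr I (\<lambda>D. f \<in> D)))"

definition TI_fin :: "rsym set \<Rightarrow> 'u pdb \<Rightarrow> bool" where
  "TI_fin S I \<longleftrightarrow> is_pdb S I \<and> finite_pdb I \<and> tuple_independent I"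

definition is_view :: "rsym set \<Rightarrow> rsym set \<Rightarrow> ('u inst \<Rightarrow> 'u inst) \<Rightarrow> bool" where
  "is_view Sin Sout V \<longleftrightarrow> (\<forall>D. is_instance Sin D \<longrightarrow> is_instance Sout (V D))"

definition monotone_view :: "rsym set \<Rightarrow> ('u inst \<Rightarrow> 'u inst) \<Rightarrow> bool" where
  "monotone_view Sin V \<longleftrightarrow>
     (\<forall>D D'. is_instance Sin D \<longrightarrow> is_instance Sin D' \<longrightarrow> D \<subseteq> D' \<longrightarrow> V D \<subseteq> V D')"

definition image_pdb :: "('u inst \<Rightarrow> 'u inst) \<Rightarrow> 'u pdb \<Rightarrow> 'u pdb" where
  "image_pdb V I = (V ` fst I, \<lambda>D'. infsum (snd I) {D \<in> fst I. V D = D'})"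

datatype 'u qterm = Var nat | Cst 'u

datatype 'u cq =
    Atom rsym "'u qterm list"
  | Eq "'u qterm" "'u qterm"
  | Conj "'u cq" "'u cq"
  | Ex nat "'u cq"

fun tqconsts :: "'u qterm \<Rightarrow> 'u set" where
  "tqconsts (Var _) = {}"
| "tqconsts (Cst c) = {c}"

fun tvars :: "'u qterm \<Rightarrow> nat set" where
  "tvars (Var x) = {x}"
| "tvars (Cst _) = {}"

fun qconsts :: "'u cq \<Rightarrow> 'u set" where
  "qconsts (Atom R ts) = (\<Union>t\<in>set ts. tqconsts t)"
| "qconsts (Eq s t) = tqconsts s \<union> tqconsts t"
| "qconsts (Conj p q) = qconsts p \<union> qconsts q"
| "qconsts (Ex x p) = qconsts p"

fun fvars :: "'u cq \<Rightarrow> nat set" where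
  "fvars (Atom R ts) = (\<Union>t\<in>set ts. tvars t)"
| "fvars (Eq s t) = tvars s \<union> tvars t"
| "fvars (Conj p q) = fvars p \<union> fvars q"
| "fvars (Ex x p) = fvars p - {x}"

fun rels :: "'u cq \<Rightarrow> rsym list" where
  "rels (Atom R ts) = [R]"
| "rels (Eq s t) = []"
| "rels (Conj p q) = rels p @ rels q"
| "rels (Ex x p) = rels p"

definition self_join_free :: "'u cq \<Rightarrow> bool" where
  "self_join_free \<phi> \<longleftrightarrow> distinct (rels \<phi>)"

fun wf_cq :: "rsym set \<Rightarrow> 'u cq \<Rightarrow> bool" where
  "wf_cq S (Atom R ts) \<longleftrightarrow> R \<in> S \<and> length ts = ar R"
| "wf_cq S (Eq s t) \<longleftrightarrow> True"
| "wf_cq S (Conj p q) \<longleftrightarrow> wf_cq S p \<and> wf_cq S q"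
| "wf_cq S (Ex x p) \<longleftrightarrow> wf_cq S p"

fun teval :: "(nat \<Rightarrow> 'u) \<Rightarrow> 'u qterm \<Rightarrow> 'u" where
  "teval \<sigma> (Var x) = \<sigma> x"
| "teval \<sigma> (Cst c) = c"

fun sat :: "'u inst \<Rightarrow> 'u set \<Rightarrow> (nat \<Rightarrow> 'u) \<Rightarrow> 'u cq \<Rightarrow> bool" where
  "sat D A \<sigma> (Atom R ts) \<longleftrightarrow> (R, map (teval \<sigma>) ts) \<in> D"
| "sat D A \<sigma> (Eq s t) \<longleftrightarrow> teval \<sigma> s = teval \<sigma> t"
| "sat D A \<sigma> (Conj p q) \<longleftrightarrow> sat D A \<sigma> p \<and> sat D A \<sigma> q"
| "sat D A \<sigma> (Ex x p) \<longleftrightarrow> (\<exists>a\<in>A. sat D A (\<sigma>(x := a)) p)"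

text \<open>An sjfCQ-view from Sin to Sout: one sjf CQ Phi R (x_1,...,x_ar(R)) per output relation R;
  the free variables x_1..x_k are represented by the variable indices 0..k-1.\<close>
definition is_sjf_view :: "rsym set \<Rightarrow> rsym set \<Rightarrow> (rsym \<Rightarrow> 'u cq) \<Rightarrow> bool" where
  "is_sjf_view Sin Sout \<Phi> \<longleftrightarrow>
     (\<forall>R\<in>Sout. wf_cq Sin (\<Phi> R) \<and> self_join_free (\<Phi> R) \<and> fvars (\<Phi> R) \<subseteq> {..<ar R})"

text \<open>Active domain semantics: tuples and quantifiers range over adom(D) \<union> adom(Phi_R).\<close>
definition sjf_view_apply :: "rsym set \<Rightarrow> (rsym \<Rightarrow> 'u cq) \<Rightarrow> 'u inst \<Rightarrow> 'u inst" where
  "sjf_view_apply Sout \<Phi> D =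
     {(R, as) | R as. R \<in> Sout \<and> length as = ar R \<and>
        set as \<subseteq> adom D \<union> qconsts (\<Phi> R) \<and>
        sat D (adom D \<union> qconsts (\<Phi> R)) (\<lambda>i. as ! i) (\<Phi> R)}"

definition in_sjfCQ_TI_fin :: "rsym set \<Rightarrow> 'u pdb \<Rightarrow> bool" where
  "in_sjfCQ_TI_fin Sout \<D> \<longleftrightarrow>
     (\<exists>Sin (I :: 'u pdb) (\<Phi> :: rsym \<Rightarrow> 'u cq).
        is_schema Sin \<and> TI_fin Sin I \<and> is_sjf_view Sin Sout \<Phi> \<and>
        \<D> = image_pdb (sjf_view_apply Sout \<Phi>) I)"

end

theory Submission
  imports Defs
begin


lemma sat_exs:
  "sat D A \<sigma> (foldr Ex xs \<phi>) \<longleftrightarrow>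
   (\<exists>\<tau>. (\<forall>j. j \<notin> set xs \<longrightarrow> \<tau> j = \<sigma> j) \<and> (\<forall>j\<in>set xs. \<tau> j \<in> A) \<and> sat D A \<tau> \<phi>)"
proof (induction xs arbitrary: \<sigma>)
  case Nil
  show ?case
  proof
    assume "sat D A \<sigma> (foldr Ex [] \<phi>)" then show "\<exists>\<tau>. (\<forall>j. j \<notin> set [] \<longrightarrow> \<tau> j = \<sigma> j) \<and> (\<forall>j\<in>set []. \<tau> j \<in> A) \<and> sat D A \<tau> \<phi>"
      by auto
  next
    assume "\<exists>\<tau>. (\<forall>j. j \<notin> set [] \<longrightarrow> \<tau> j = \<sigma> j) \<and> (\<forall>j\<in>set []. \<tau> j \<in> A) \<and> sat D A \<tau> \<phi>"
    then obtain \<tau> where "\<forall>j. \<tau> j = \<sigma> j" "sat D A \<tau> \<phi>" by auto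
    then have "\<tau> = \<sigma>" by auto
    then show "sat D A \<sigma> (foldr Ex [] \<phi>)" using \<open>sat D A \<tau> \<phi>\<close> by simp
  qed
next
  case (Cons x xs)
  show ?case
  proof
    assume "sat D A \<sigma> (foldr Ex (x # xs) \<phi>)"
    then obtain a where a: "a \<in> A" "sat D A (\<sigma>(x := a)) (foldr Ex xs \<phi>)" by auto
    then obtain \<tau> where t: "\<forall>j. j \<notin> set xs \<longrightarrow> \<tau> j = (\<sigma>(x := a)) j" "\<forall>j\<in>set xs. \<tau> j \<in> A" "sat D A \<tau> \<phi>"
      using Cons.IH by blast
    show "\<exists>\<tau>. (\<forall>j. j \<notin> set (x#xs) \<longrightarrow> \<tau> j = \<sigma> j) \<and> (\<forall>j\<in>set (x#xs). \<tau> j \<in> A) \<and> sat D A \<tau> \<phi>"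
      apply (rule exI[of _ \<tau>]) using t a by (cases "x \<in> set xs") auto
  next
    assume "\<exists>\<tau>. (\<forall>j. j \<notin> set (x#xs) \<longrightarrow> \<tau> j = \<sigma> j) \<and> (\<forall>j\<in>set (x#xs). \<tau> j \<in> A) \<and> sat D A \<tau> \<phi>"
    then obtain \<tau> where t: "\<forall>j. j \<notin> set (x#xs) \<longrightarrow> \<tau> j = \<sigma> j" "\<forall>j\<in>set (x#xs). \<tau> j \<in> A" "sat D A \<tau> \<phi>"
      by blast
    have "sat D A (\<sigma>(x := \<tau> x)) (foldr Ex xs \<phi>)"
      unfolding Cons.IH apply (rule exI[of _ \<tau>]) using t by auto
    then show "sat D A \<sigma> (foldr Ex (x # xs) \<phi>)" using t by auto
  qed
qed

lemma fvars_exs: "fvars (foldr Ex xs \<phi>) = fvars \<phi> - set xs"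
  by (induction xs) auto
lemma qconsts_exs: "qconsts (foldr Ex xs \<phi>) = qconsts \<phi>"
  by (induction xs) auto
lemma rels_exs: "rels (foldr Ex xs \<phi>) = rels \<phi>"
  by (induction xs) auto
lemma wf_exs: "wf_cq S (foldr Ex xs \<phi>) = wf_cq S \<phi>"
  by (induction xs) auto

definition conjs :: "(nat \<Rightarrow> rsym) \<Rightarrow> nat \<Rightarrow> nat list \<Rightarrow> 'u cq \<Rightarrow> 'u cq" where
  "conjs X m xs \<psi> = foldr (\<lambda>i acc. Conj (Atom (X i) [Var (m+i)]) acc) xs \<psi>"

lemma sat_conjs: "sat D A \<tau> (conjs X m xs \<psi>) \<longleftrightarrow> (\<forall>i\<in>set xs. (X i, [\<tau> (m+i)]) \<in> D) \<and> sat D A \<tau> \<psi>"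
  unfolding conjs_def by (induction xs) auto
lemma fvars_conjs: "fvars (conjs X m xs \<psi>) = (\<lambda>i. m+i) ` set xs \<union> fvars \<psi>"
  unfolding conjs_def by (induction xs) auto
lemma qconsts_conjs: "qconsts (conjs X m xs \<psi>) = qconsts \<psi>"
  unfolding conjs_def by (induction xs) auto
lemma rels_conjs: "rels (conjs X m xs \<psi>) = map X xs @ rels \<psi>"
  unfolding conjs_def by (induction xs) auto
lemma wf_conjs: "wf_cq S (conjs X m xs \<psi>) \<longleftrightarrow> (\<forall>i\<in>set xs. X i \<in> S \<and> ar (X i) = 1) \<and> wf_cq S \<psi>"
  unfolding conjs_def by (induction xs) auto

lemma Pr_cong: "(\<And>D. D \<in> fst I \<Longrightarrow> E D = E' D) \<Longrightarrow> Pr I E = Pr I E'"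
  unfolding Pr_def by (metis (mono_tags, lifting) Collect_cong)

lemma Pr_image:
  assumes "finite (fst I)"
  shows "Pr (image_pdb W I) E = Pr I (\<lambda>D. E (W D))"
proof -
  have "Pr (image_pdb W I) E = (\<Sum>D'\<in>{D' \<in> W ` fst I. E D'}. \<Sum>D\<in>{D \<in> fst I. W D = D'}. snd I D)"
    unfolding Pr_def image_pdb_def using assms
    by (simp add: infsum_finite)
  also have "\<dots> = (\<Sum>D'\<in>{D' \<in> W ` fst I. E D'}. \<Sum>D\<in>{D \<in> {D \<in> fst I. E (W D)}. W D = D'}. snd I D)"
    by (rule sum.cong) (auto intro!: sum.cong)
  also have "\<dots> = (\<Sum>D\<in>{D \<in> fst I. E (W D)}. snd I D)"
    by (rule sum.group) (use assms in auto)
  also have "\<dots> = Pr I (\<lambda>D. E (W D))" unfolding Pr_def using assms by (simp add: infsum_finite)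
  finally show ?thesis .
qed

lemma Pr_True: "is_pdb S I \<Longrightarrow> Pr I (\<lambda>_. True) = 1"
  unfolding Pr_def is_pdb_def by (simp add: infsumI)

lemma Pr_False: "Pr I (\<lambda>_. False) = 0"
  unfolding Pr_def by simp

lemma image_image_pdb:
  assumes "finite (fst I)"
  shows "image_pdb W (image_pdb E I) = image_pdb (\<lambda>D. W (E D)) I"
proof -
  have "infsum (\<lambda>D'. infsum (snd I) {D \<in> fst I. E D = D'}) {D' \<in> E ` fst I. W D' = X} =
        infsum (snd I) {D \<in> fst I. W (E D) = X}" for X
    using Pr_image[OF assms, of E "\<lambda>D'. W D' = X"] unfolding Pr_def image_pdb_def by simp
  then show ?thesis unfolding image_pdb_def by (auto simp: image_image)
qed

lemma image_pdb_cong: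
  "(\<And>D. D \<in> fst I \<Longrightarrow> W D = W' D) \<Longrightarrow> image_pdb W I = image_pdb W' I"
proof -
  assume a: "\<And>D. D \<in> fst I \<Longrightarrow> W D = W' D"
  have 1: "W ` fst I = W' ` fst I" using a by auto
  have 2: "\<And>X. {D \<in> fst I. W D = X} = {D \<in> fst I. W' D = X}" using a by auto
  show ?thesis unfolding image_pdb_def by (simp only: 1 2)
qed

lemma is_pdb_image:
  assumes "is_pdb S I" "finite (fst I)" "\<And>D. D \<in> fst I \<Longrightarrow> is_instance S' (W D)"
  shows "is_pdb S' (image_pdb W I)"
proof -
  have fin: "finite (W ` fst I)" using assms(2) by simp
  have "Pr (image_pdb W I) (\<lambda>_. True) = 1" using Pr_image[OF assms(2)] Pr_True[OF assms(1)] by simp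
  then have "infsum (snd (image_pdb W I)) (W ` fst I) = 1" unfolding Pr_def image_pdb_def by simp
  then have hs: "(snd (image_pdb W I) has_sum 1) (W ` fst I)"
    using fin by (metis has_sum_infsum summable_on_finite)
  have nn: "snd (image_pdb W I) D' \<ge> 0" for D'
    using assms(1,2) unfolding is_pdb_def image_pdb_def
    by (auto simp: infsum_finite intro!: sum_nonneg)
  have z: "snd (image_pdb W I) D' = 0" if "D' \<notin> fst (image_pdb W I)" for D'
  proof -
    have "{D \<in> fst I. W D = D'} = {}" using that unfolding image_pdb_def by auto
    then show ?thesis unfolding image_pdb_def by (metis infsum_empty snd_conv)
  qed
  have ne: "fst (image_pdb W I) \<noteq> {}" using assms(1) unfolding is_pdb_def image_pdb_def by simp
  have inst: "\<forall>D\<in>fst (image_pdb W I). is_instance S' D" using assms(3) unfolding image_pdb_def by auto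
  show ?thesis unfolding is_pdb_def using hs nn fin z ne inst
    by (auto simp: countable_finite image_pdb_def)
qed



locale constr =
  fixes Sin Sout :: "rsym set" and I :: "'u pdb" and V :: "'u inst \<Rightarrow> 'u inst"
    and fs :: "'u fact list" and one star :: 'u
  assumes TI: "TI_fin Sin I" and view: "is_view Sin Sout V" and mono: "monotone_view Sin V"
    and fs: "set fs = \<Union>(fst I)" "distinct fs" and os: "one \<noteq> star"
    and Sout: "is_schema Sout"
begin

abbreviation "n \<equiv> length fs"
abbreviation "F \<equiv> set fs"
definition Xr :: "nat \<Rightarrow> rsym" where "Xr i = (2*i, 1)"
definition Tr :: "rsym \<Rightarrow> rsym" where "Tr R = (2*fst R+1, snd R + n)"
definition bM :: "'u inst \<Rightarrow> 'u list" where "bM M = map (\<lambda>f. if f \<in> M then one else star) fs"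
definition CX :: "'u inst" where "CX = {(Xr i, [star]) | i. i < n}"
definition CT :: "'u inst" where "CT = {(Tr R, a @ bM M) | R M a. R \<in> Sout \<and> M \<subseteq> F \<and> (R,a) \<in> V M}"
definition enc :: "'u inst \<Rightarrow> 'u inst" where
  "enc D = {(Xr i, [one]) | i. i < n \<and> fs!i \<in> D} \<union> CX \<union> CT"
definition Phi :: "rsym \<Rightarrow> 'u cq" where
  "Phi R = foldr Ex (map (\<lambda>i. ar R + i) [0..<n])
     (conjs Xr (ar R) [0..<n] (Atom (Tr R) (map Var [0..<ar R + n])))"
definition Sin' :: "rsym set" where "Sin' = Xr ` {..<n} \<union> Tr ` Sout"

lemma Xr_inj[simp]: "Xr i = Xr j \<longleftrightarrow> i = j" by (auto simp: Xr_def)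
lemma Tr_inj[simp]: "Tr R = Tr R' \<longleftrightarrow> R = R'" by (auto simp: Tr_def prod_eq_iff)
lemma Xr_Tr[simp]: "Xr i \<noteq> Tr R" "Tr R \<noteq> Xr i" by (auto simp: Xr_def Tr_def) presburger+
lemma ar_Xr[simp]: "ar (Xr i) = 1" by (simp add: ar_def Xr_def)
lemma ar_Tr[simp]: "ar (Tr R) = ar R + n" by (simp add: ar_def Tr_def)
lemma len_bM[simp]: "length (bM M) = n" by (simp add: bM_def)

lemma pdb: "is_pdb Sin I" and finI: "finite (fst I)"
  using TI unfolding TI_fin_def finite_pdb_def by auto

lemma inst_I: "D \<in> fst I \<Longrightarrow> is_instance Sin D" using pdb unfolding is_pdb_def by auto
lemma sub_F: "D \<in> fst I \<Longrightarrow> D \<subseteq> F" using fs by auto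
lemma inst_M: "M \<subseteq> F \<Longrightarrow> is_instance Sin M"
  unfolding is_instance_def
proof
  assume M: "M \<subseteq> F"
  show "finite M" using M finite_set finite_subset by blast
  show "\<forall>f\<in>M. is_fact Sin f"
  proof
    fix f assume "f \<in> M"
    then obtain D where "D \<in> fst I" "f \<in> D" using M fs by auto
    then show "is_fact Sin f" using inst_I unfolding is_instance_def by auto
  qed
qed

lemma V_inst: "M \<subseteq> F \<Longrightarrow> is_instance Sout (V M)"
  using view inst_M unfolding is_view_def by auto

lemma finite_CT: "finite CT"
proof -
  have "CT \<subseteq> (\<lambda>(M,g). (Tr (fst g), snd g @ bM M)) ` (SIGMA M:Pow F. V M)"
    unfolding CT_def by (force simp: image_iff)
  moreover have "finite (SIGMA M:Pow F. V M)"
    using V_inst unfolding is_instance_def by (auto intro!: finite_SigmaI)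
  ultimately show ?thesis by (meson finite_imageI finite_subset)
qed

lemma finite_enc: "finite (enc D)"
proof -
  have "{(Xr i, [one]) | i. i < n \<and> fs!i \<in> D} \<subseteq> (\<lambda>i. (Xr i, [one])) ` {..<n}" by auto
  moreover have "CX = (\<lambda>i. (Xr i, [star])) ` {..<n}" unfolding CX_def by auto
  ultimately show ?thesis unfolding enc_def using finite_CT by (auto intro: finite_subset)
qed

lemma inst_enc: "is_instance Sin' (enc D)"
  unfolding is_instance_def using finite_enc
proof (intro conjI ballI)
  fix f assume "f \<in> enc D"
  then show "is_fact Sin' f"
  proof (unfold enc_def, elim UnE)
    assume "f \<in> CT"
    then obtain R M a where "f = (Tr R, a @ bM M)" "R \<in> Sout" "M \<subseteq> F" "(R,a) \<in> V M"
      unfolding CT_def by auto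
    moreover then have "length a = ar R" using V_inst unfolding is_instance_def is_fact_def by force
    ultimately show ?thesis unfolding is_fact_def Sin'_def by auto
  qed (auto simp: is_fact_def Sin'_def CX_def)
qed

lemma sat_Phi:
  "sat D A \<sigma> (Phi R) \<longleftrightarrow>
   (\<exists>\<tau>. (\<forall>j. j \<notin> {ar R..<ar R + n} \<longrightarrow> \<tau> j = \<sigma> j) \<and> (\<forall>j\<in>{ar R..<ar R + n}. \<tau> j \<in> A) \<and>
        (\<forall>i<n. (Xr i, [\<tau> (ar R + i)]) \<in> D) \<and> (Tr R, map \<tau> [0..<ar R + n]) \<in> D)"
proof -
  have e: "set (map (\<lambda>i. ar R + i) [0..<n]) = {ar R..<ar R + n}"
    by (auto simp: image_iff)
  show ?thesis unfolding Phi_def sat_exs sat_conjs e by (simp add: comp_def atLeast0LessThan Ball_def)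
qed

lemma mem_X: "(Xr i, [u]) \<in> enc D \<longleftrightarrow> i < n \<and> ((u = one \<and> fs!i \<in> D) \<or> u = star)"
  unfolding enc_def CX_def CT_def by auto

lemma mem_T: "(Tr R, bs) \<in> enc D \<longleftrightarrow> (\<exists>M a. R \<in> Sout \<and> M \<subseteq> F \<and> (R,a) \<in> V M \<and> bs = a @ bM M)"
proof
  assume "(Tr R, bs) \<in> enc D"
  then have "(Tr R, bs) \<in> CT" unfolding enc_def CX_def by auto
  then obtain R' M a where "(Tr R, bs) = (Tr R', a @ bM M)" "R' \<in> Sout \<and> M \<subseteq> F \<and> (R',a) \<in> V M"
    unfolding CT_def by blast
  then show "\<exists>M a. R \<in> Sout \<and> M \<subseteq> F \<and> (R,a) \<in> V M \<and> bs = a @ bM M" by auto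
next
  assume "\<exists>M a. R \<in> Sout \<and> M \<subseteq> F \<and> (R,a) \<in> V M \<and> bs = a @ bM M"
  then have "(Tr R, bs) \<in> CT" unfolding CT_def by blast
  then show "(Tr R, bs) \<in> enc D" unfolding enc_def by blast
qed

lemma qconsts_Phi[simp]: "qconsts (Phi R) = {}"
  unfolding Phi_def qconsts_exs qconsts_conjs by auto

lemma adomI: "(g, bs) \<in> D \<Longrightarrow> u \<in> set bs \<Longrightarrow> u \<in> adom D"
  unfolding adom_def by force

lemma view_eq:
  assumes D: "D \<in> fst I"
  shows "sjf_view_apply Sout Phi (enc D) = V D"
proof (intro set_eqI iffI)
  fix g assume "g \<in> sjf_view_apply Sout Phi (enc D)"
  then obtain R as where g: "g = (R, as)" and R: "R \<in> Sout" and las: "length as = ar R"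
    and st: "sat (enc D) (adom (enc D)) (\<lambda>i. as ! i) (Phi R)"
    unfolding sjf_view_apply_def by auto
  define m where "m = ar R"
  from st obtain \<tau> where t1: "\<forall>j. j \<notin> {m..<m + n} \<longrightarrow> \<tau> j = as ! j"
     and t3: "\<forall>i<n. (Xr i, [\<tau> (m + i)]) \<in> enc D" and t4: "(Tr R, map \<tau> [0..<m + n]) \<in> enc D"
    unfolding sat_Phi m_def by auto
  from t4 obtain M a where M: "M \<subseteq> F" "(R,a) \<in> V M" and eq: "map \<tau> [0..<m + n] = a @ bM M"
    unfolding mem_T by auto
  have la: "length a = m" using V_inst[OF M(1)] M(2) unfolding is_instance_def is_fact_def m_def by force
  have "take m (map \<tau> [0..<m + n]) = a" using eq la by simp
  then have "map \<tau> [0..<m] = a" by (simp add: take_map)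
  then have "as = a" using t1 las la unfolding m_def by (intro nth_equalityI) auto
  have "M \<subseteq> D"
  proof
    fix f assume "f \<in> M"
    then obtain i where i: "i < n" "fs ! i = f" using M(1) by (metis in_set_conv_nth subsetD)
    have "(map \<tau> [0..<m + n]) ! (m + i) = (a @ bM M) ! (m + i)" using eq by simp
    then have "\<tau> (m + i) = one" using i la \<open>f \<in> M\<close> by (simp add: nth_append bM_def)
    then show "f \<in> D" using t3 i os unfolding mem_X by metis
  qed
  then have "V M \<subseteq> V D" using mono inst_M[OF M(1)] inst_I[OF D] unfolding monotone_view_def by blast
  then show "g \<in> V D" using M(2) g \<open>as = a\<close> by auto
next
  fix g assume gV: "g \<in> V D"
  obtain R as where g: "g = (R, as)" by (cases g)
  have DF: "D \<subseteq> F" using sub_F[OF D] .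
  have R: "R \<in> Sout" and las: "length as = ar R"
    using V_inst[OF DF] gV g unfolding is_instance_def is_fact_def by auto
  define m where "m = ar R"
  define \<tau> where "\<tau> = (\<lambda>j. if m \<le> j \<and> j < m + n then bM D ! (j - m) else as ! j)"
  have mp: "map \<tau> [0..<m + n] = as @ bM D"
    using las unfolding m_def[symmetric] by (intro nth_equalityI) (auto simp: \<tau>_def nth_append)
  have T: "(Tr R, map \<tau> [0..<m + n]) \<in> enc D"
    unfolding mp mem_T using R DF gV g by blast
  have X: "\<forall>i<n. (Xr i, [\<tau> (m + i)]) \<in> enc D"
    by (auto simp: mem_X \<tau>_def bM_def)
  have "sat (enc D) (adom (enc D)) (\<lambda>i. as ! i) (Phi R)"
    unfolding sat_Phi m_def[symmetric]
  proof (rule exI[of _ \<tau>], intro conjI)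
    show "\<forall>j. j \<notin> {m..<m+n} \<longrightarrow> \<tau> j = as ! j" by (auto simp: \<tau>_def)
    show "\<forall>i<n. (Xr i, [\<tau> (m + i)]) \<in> enc D" by (rule X)
    show "(Tr R, map \<tau> [0..<m + n]) \<in> enc D" by (rule T)
    show "\<forall>j\<in>{m..<m+n}. \<tau> j \<in> adom (enc D)"
    proof
      fix j assume that: "j \<in> {m..<m+n}"
      have "j - m < n" using that by auto
      then have "(Xr (j - m), [\<tau> (m + (j - m))]) \<in> enc D" using X by blast
      then show "\<tau> j \<in> adom (enc D)" using that by (auto intro: adomI)
    qed
  qed
  moreover have "set as \<subseteq> adom (enc D)"
    using T unfolding mp by (auto intro: adomI)
  ultimately have s1: "sat (enc D) (adom (enc D) \<union> qconsts (Phi R)) (\<lambda>i. as ! i) (Phi R)"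
    and s2: "set as \<subseteq> adom (enc D) \<union> qconsts (Phi R)"
    by (simp_all only: qconsts_Phi Un_empty_right)
  show "g \<in> sjf_view_apply Sout Phi (enc D)"
    unfolding sjf_view_apply_def g mem_Collect_eq
    by (intro exI[of _ R] exI[of _ as] conjI refl R las s1 s2)
qed

end


context constr begin

lemma TI_I: "tuple_independent I" using TI unfolding TI_fin_def by auto

lemma TI': "tuple_independent (image_pdb enc I)"
  unfolding tuple_independent_def
proof (intro allI impI)
  fix G :: "'u fact set" assume finG: "finite G"
  define C where "C = CX \<union> CT"
  define Xo where "Xo = (\<lambda>i. (Xr i, [one])) ` {..<n}"
  have encC: "enc D = {(Xr i, [one]) | i. i < n \<and> fs!i \<in> D} \<union> C" for D
    unfolding enc_def C_def by auto
  have XoC: "Xo \<inter> C = {}" unfolding Xo_def C_def CX_def CT_def using os by auto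
  have PrT: "Pr I (\<lambda>_. True) = 1" using Pr_True[OF pdb] .
  have "Pr I (\<lambda>D. G \<subseteq> enc D) = (\<Prod>g\<in>G. Pr I (\<lambda>D. g \<in> enc D))"
  proof (cases "G \<subseteq> Xo \<union> C")
    case True
    define J where "J = {i. i < n \<and> (Xr i, [one]) \<in> G}"
    have finJ: "finite J" unfolding J_def by auto
    have injJ: "inj_on (\<lambda>i. fs ! i) J" using fs(2) unfolding J_def inj_on_def
      by (auto simp: nth_eq_iff_index_eq)
    have "Pr I (\<lambda>D. G \<subseteq> enc D) = Pr I (\<lambda>D. (\<lambda>i. fs ! i) ` J \<subseteq> D)"
    proof (rule Pr_cong)
      fix D
      show "(G \<subseteq> enc D) = ((\<lambda>i. fs ! i) ` J \<subseteq> D)"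
      proof
        assume a: "G \<subseteq> enc D"
        show "(\<lambda>i. fs ! i) ` J \<subseteq> D"
        proof
          fix f assume "f \<in> (\<lambda>i. fs ! i) ` J"
          then obtain i where i: "i \<in> J" "f = fs ! i" by auto
          then have "(Xr i, [one]) \<in> enc D" using a unfolding J_def by auto
          then show "f \<in> D" using i os unfolding mem_X by auto
        qed
      next
        assume a: "(\<lambda>i. fs ! i) ` J \<subseteq> D"
        show "G \<subseteq> enc D"
        proof
          fix g assume g: "g \<in> G"
          show "g \<in> enc D"
          proof (cases "g \<in> C")
            case True then show ?thesis unfolding encC by auto
          next
            case False
            then obtain i where i: "i < n" "g = (Xr i, [one])" using g \<open>G \<subseteq> Xo \<union> C\<close> unfolding Xo_def by auto
            then have "i \<in> J" using g unfolding J_def by auto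
            then have "fs ! i \<in> D" using a by auto
            then show ?thesis unfolding i(2) mem_X using i(1) by auto
          qed
        qed
      qed
    qed
    also have "\<dots> = (\<Prod>f\<in>(\<lambda>i. fs ! i) ` J. Pr I (\<lambda>D. f \<in> D))"
      using TI_I finJ unfolding tuple_independent_def by auto
    also have "\<dots> = (\<Prod>i\<in>J. Pr I (\<lambda>D. fs ! i \<in> D))"
      using prod.reindex[OF injJ] by simp
    finally have L: "Pr I (\<lambda>D. G \<subseteq> enc D) = (\<Prod>i\<in>J. Pr I (\<lambda>D. fs ! i \<in> D))" .
    have Gsplit: "G = (G \<inter> C) \<union> (\<lambda>i. (Xr i, [one])) ` J"
      using True unfolding J_def Xo_def by auto
    have disj: "(G \<inter> C) \<inter> (\<lambda>i. (Xr i, [one])) ` J = {}" using XoC unfolding Xo_def J_def by auto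
    have "(\<Prod>g\<in>G. Pr I (\<lambda>D. g \<in> enc D)) =
          (\<Prod>g\<in>G \<inter> C. Pr I (\<lambda>D. g \<in> enc D)) * (\<Prod>g\<in>(\<lambda>i. (Xr i, [one])) ` J. Pr I (\<lambda>D. g \<in> enc D))"
      by (subst Gsplit, rule prod.union_disjoint) (use finG finJ disj in auto)
    also have "(\<Prod>g\<in>G \<inter> C. Pr I (\<lambda>D. g \<in> enc D)) = 1"
    proof (rule prod.neutral, rule ballI)
      fix g assume "g \<in> G \<inter> C"
      then have "Pr I (\<lambda>D. g \<in> enc D) = Pr I (\<lambda>_. True)" by (intro Pr_cong) (auto simp: encC)
      then show "Pr I (\<lambda>D. g \<in> enc D) = 1" using PrT by simp
    qed
    also have "(\<Prod>g\<in>(\<lambda>i. (Xr i, [one])) ` J. Pr I (\<lambda>D. g \<in> enc D)) =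
               (\<Prod>i\<in>J. Pr I (\<lambda>D. (Xr i, [one]) \<in> enc D))"
      by (rule prod.reindex_cong[where l="\<lambda>i. (Xr i, [one])"]) (auto simp: inj_on_def)
    also have "\<dots> = (\<Prod>i\<in>J. Pr I (\<lambda>D. fs ! i \<in> D))"
      by (rule prod.cong[OF refl], rule Pr_cong) (use os in \<open>auto simp: mem_X J_def\<close>)
    finally show ?thesis using L by simp
  next
    case False
    then obtain g where g: "g \<in> G" "g \<notin> Xo \<union> C" by auto
    have ne: "g \<notin> enc D" for D using g unfolding encC Xo_def by auto
    have "Pr I (\<lambda>D. G \<subseteq> enc D) = Pr I (\<lambda>_. False)" by (rule Pr_cong) (use ne g in auto)
    also have "\<dots> = 0" by (rule Pr_False)
    also have "0 = (\<Prod>g\<in>G. Pr I (\<lambda>D. g \<in> enc D))"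
    proof (rule sym, rule prod_zero[OF finG], rule bexI[OF _ g(1)])
      have "Pr I (\<lambda>D. g \<in> enc D) = Pr I (\<lambda>_. False)" by (rule Pr_cong) (use ne in auto)
      then show "Pr I (\<lambda>D. g \<in> enc D) = 0" using Pr_False by simp
    qed
    finally show ?thesis .
  qed
  then show "Pr (image_pdb enc I) (\<lambda>D. G \<subseteq> D) = (\<Prod>f\<in>G. Pr (image_pdb enc I) (\<lambda>D. f \<in> D))"
    by (simp add: Pr_image[OF finI])
qed

lemma main: "in_sjfCQ_TI_fin Sout (image_pdb V I)"
  unfolding in_sjfCQ_TI_fin_def
proof (intro exI conjI)
  show "is_schema Sin'" using Sout unfolding is_schema_def Sin'_def by auto
  show "TI_fin Sin' (image_pdb enc I)" unfolding TI_fin_def finite_pdb_def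
    using is_pdb_image[OF pdb finI inst_enc] TI' finI by (auto simp: image_pdb_def)
  show "is_sjf_view Sin' Sout Phi" unfolding is_sjf_view_def
  proof (intro ballI conjI)
    fix R assume R: "R \<in> Sout"
    show "wf_cq Sin' (Phi R)" unfolding Phi_def wf_exs wf_conjs using R by (auto simp: Sin'_def)
    have "Tr R \<notin> Xr ` {0..<n}" by auto
    then show "self_join_free (Phi R)" unfolding self_join_free_def Phi_def rels_exs rels_conjs
      by (auto simp: distinct_map inj_on_def)
    show "fvars (Phi R) \<subseteq> {..<ar R}" unfolding Phi_def fvars_exs fvars_conjs by auto
  qed
  have "image_pdb (sjf_view_apply Sout Phi) (image_pdb enc I) = image_pdb (\<lambda>D. sjf_view_apply Sout Phi (enc D)) I"
    by (rule image_image_pdb[OF finI])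
  also have "\<dots> = image_pdb V I" by (rule image_pdb_cong) (rule view_eq)
  finally show "image_pdb V I = image_pdb (sjf_view_apply Sout Phi) (image_pdb enc I)" by simp
qed

end

theorem proposition7p3:
  fixes Sin Sout :: "rsym set"
    and I :: "('u::countable) pdb"
    and V :: "'u inst \<Rightarrow> 'u inst"
  assumes "infinite (UNIV :: 'u set)"
    and "is_schema Sin" and "is_schema Sout"
    and "TI_fin Sin I"
    and "is_view Sin Sout V"
    and "monotone_view Sin V"
  shows "in_sjfCQ_TI_fin Sout (image_pdb V I)"
proof -
  obtain one :: 'u where True by simp
  have "UNIV \<noteq> {one}"
  proof
    assume u: "UNIV = {one}"
    have "finite {one}" by simp
    then have "finite (UNIV :: 'u set)" unfolding u .
    with assms(1) show False by simp
  qed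
  then obtain star :: 'u where "star \<notin> {one}" by blast
  then have os: "one \<noteq> star" by auto
  have f1: "finite (fst I)" using assms(4) by (simp add: TI_fin_def finite_pdb_def)
  have f2: "\<forall>D\<in>fst I. is_instance Sin D" using assms(4) by (simp add: TI_fin_def is_pdb_def)
  have "finite (\<Union>(fst I))" by (rule finite_Union[OF f1]) (use f2 in \<open>auto simp: is_instance_def\<close>)
  then obtain fs where fs1: "set fs = \<Union>(fst I)" and fs2: "distinct fs" using finite_distinct_list by metis
  interpret constr Sin Sout I V fs one star
    by (rule constr.intro) (fact assms(4) assms(5) assms(6) fs1 fs2 os assms(3))+
  show ?thesis by (rule main)
qed

end
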